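(* Let $\mu>-\tfrac12$ and $\xi,\alpha\in\mathbb{R}$. Then, for all real $t$, $$\text{(i)}\quad \sum_{n=0}^{\infty}\frac{h_{n+1}^{\mu}(\xi,\alpha)}{\gamma_{\mu}(n)}t^{n}=(\xi+2\alpha t)\,e^{\alpha t^{2}}e_{\mu}(\xi t),$$ $$\text{(ii)}\quad \sum_{n=0}^{\infty}\frac{h_{n+2}^{\mu}(\xi,\alpha)}{\gamma_{\mu}(n)}t^{n}=(\xi^{2}+4\xi\alpha t+4\alpha^{2}t^{2}+2\alpha)\,e^{\alpha t^{2}}e_{\mu}(\xi t)+4\alpha\mu\, e^{\alpha t^{2}}e_{\mu}(-\xi t).$$
   Context: For $\mu>-\tfrac12$ define $\gamma_\mu(2k)=\dfrac{2^{2k}k!\,\Gamma(k+\mu+1/2)}{\Gamma(\mu+1/2)}$ and $\gamma_\mu(2k+1)=\dfrac{2^{2k+1}k!\,\Gamma(k+\mu+3/2)}{\Gamma(\mu+1/2)}$ for $k\in\{0,1,2,\dots\}$. The Dunkl analogue of the exponential is $e_\mu(x)=\sum_{k=0}^\infty \dfrac{x^k}{\gamma_\mu(k)}$. The polynomials $h_n^\mu(\xi,\alpha)$ are defined by $$h_n^\mu(\xi,\alpha)=\gamma_\mu(n)\sum_{k=0}^{\lfloor n/2\rfloor}\frac{\alpha^k\xi^{n-2k}}{k!\,\gamma_\mu(n-2k)},$$ equivalently by the generating function $\sum_{n=0}^\infty \dfrac{h_n^\mu(\xi,\alpha)}{\gamma_\mu(n)}t^n=e^{\alpha t^2}e_\mu(\xi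 t)$. *)

theory Defs
  imports "HOL-Analysis.Analysis"
begin

definition dunkl_gamma :: "real \<Rightarrow> nat \<Rightarrow> real" where
  "dunkl_gamma \<mu> n =
     (if even n then
        2 ^ n * fact (n div 2) * Gamma (real (n div 2) + \<mu> + 1/2) / Gamma (\<mu> + 1/2)
      else
        2 ^ n * fact (n div 2) * Gamma (real (n div 2) + \<mu> + 3/2) / Gamma (\<mu> + 1/2))"

definition dunkl_exp :: "real \<Rightarrow> real \<Rightarrow> real" where
  "dunkl_exp \<mu> x = (\<Sum>k. x ^ k / dunkl_gamma \<mu> k)"

definition dunkl_heat_poly :: "real \<Rightarrow> nat \<Rightarrow> real \<Rightarrow> real \<Rightarrow> real" where
  "dunkl_heat_poly \<mu> n \<xi> \<alpha> =
     dunkl_gamma \<mu> n *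
       (\<Sum>k\<le>n div 2. \<alpha> ^ k * \<xi> ^ (n - 2 * k) / (fact k * dunkl_gamma \<mu> (n - 2 * k)))"

end

theory Submission
  imports Defs
begin

definition th :: "real \<Rightarrow> nat \<Rightarrow> real" where
  "th \<mu> m = real m + (if odd m then 2 * \<mu> else 0)"

lemma Gamma_plus1_pos: "(z::real) > 0 \<Longrightarrow> Gamma (z + 1) = z * Gamma z"
  by (rule Gamma_plus1) (auto elim!: nonpos_Ints_cases)

lemma gamma_pos: assumes "\<mu> > - 1/2" shows "dunkl_gamma \<mu> n > 0"
proof -
  have "Gamma (real (n div 2) + \<mu> + 1/2) > 0" "Gamma (real (n div 2) + \<mu> + 3/2) > 0"
       "Gamma (\<mu> + 1/2) > 0"
    using assms by (auto intro!: Gamma_real_pos)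
  then show ?thesis unfolding dunkl_gamma_def by auto
qed

lemma gamma_0: assumes "\<mu> > - 1/2" shows "dunkl_gamma \<mu> 0 = 1"
proof -
  have "Gamma (\<mu> + 1/2) > 0" using assms by (auto intro!: Gamma_real_pos)
  then show ?thesis unfolding dunkl_gamma_def by simp
qed

lemma th_pos: assumes "\<mu> > - 1/2" "m > 0" shows "th \<mu> m > 0"
  using assms unfolding th_def by auto

lemma gamma_Suc: assumes "\<mu> > - 1/2"
  shows "dunkl_gamma \<mu> (Suc n) = th \<mu> (Suc n) * dunkl_gamma \<mu> n"
proof (cases "even n")
  case True
  then obtain k where n: "n = 2*k" by auto
  have g: "Gamma (real k + \<mu> + 3/2) = (real k + \<mu> + 1/2) * Gamma (real k + \<mu> + 1/2)"
    using Gamma_plus1_pos[of "real k + \<mu> + 1/2"] assms by (simp add: algebra_simps)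
  show ?thesis unfolding dunkl_gamma_def th_def n
    by (simp add: g)
next
  case False
  then obtain k where n: "n = 2*k+1" using oddE by blast
  have s: "Suc n div 2 = Suc k" "n div 2 = k" using n by auto
  have g: "Gamma (real (Suc k) + \<mu> + 1/2) = Gamma (real k + \<mu> + 3/2)"
    by (simp add: algebra_simps)
  show ?thesis unfolding dunkl_gamma_def th_def s
    using n by (simp add: g field_simps)
qed

definition aa :: "real \<Rightarrow> nat \<Rightarrow> real" where "aa \<alpha> k = \<alpha> ^ k / fact k"
definition bb :: "real \<Rightarrow> real \<Rightarrow> nat \<Rightarrow> real" where "bb \<mu> \<xi> m = \<xi> ^ m / dunkl_gamma \<mu> m"
definition cc :: "real \<Rightarrow> real \<Rightarrow> real \<Rightarrow> nat \<Rightarrow> nat \<Rightarrow> real" where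
  "cc \<mu> \<xi> \<alpha> n k = (if 2*k \<le> n then aa \<alpha> k * bb \<mu> \<xi> (n - 2*k) else 0)"
definition SS :: "real \<Rightarrow> real \<Rightarrow> real \<Rightarrow> nat \<Rightarrow> real" where
  "SS \<mu> \<xi> \<alpha> n = (\<Sum>k\<le>n div 2. aa \<alpha> k * bb \<mu> \<xi> (n - 2*k))"
definition VV :: "real \<Rightarrow> real \<Rightarrow> real \<Rightarrow> nat \<Rightarrow> real" where
  "VV \<mu> \<xi> \<alpha> n = (case n of 0 \<Rightarrow> 0 | Suc p \<Rightarrow> SS \<mu> \<xi> \<alpha> p)"

lemma SS_ext: assumes "n div 2 \<le> N" shows "SS \<mu> \<xi> \<alpha> n = (\<Sum>k\<le>N. cc \<mu> \<xi> \<alpha> n k)"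
proof -
  have "(\<Sum>k\<le>N. cc \<mu> \<xi> \<alpha> n k) = (\<Sum>k\<le>n div 2. cc \<mu> \<xi> \<alpha> n k)"
    by (rule sum.mono_neutral_right) (use assms in \<open>auto simp: cc_def\<close>)
  also have "\<dots> = SS \<mu> \<xi> \<alpha> n"
    unfolding SS_def by (rule sum.cong) (auto simp: cc_def)
  finally show ?thesis by simp
qed

lemma heat_SS: "dunkl_heat_poly \<mu> n \<xi> \<alpha> = dunkl_gamma \<mu> n * SS \<mu> \<xi> \<alpha> n"
  unfolding dunkl_heat_poly_def SS_def aa_def bb_def by simp

lemma bb_Suc: assumes "\<mu> > - 1/2"
  shows "th \<mu> (Suc m) * bb \<mu> \<xi> (Suc m) = \<xi> * bb \<mu> \<xi> m"
  using gamma_Suc[OF assms, of m] gamma_pos[OF assms, of m] th_pos[OF assms, of "Suc m"]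
  unfolding bb_def by (simp add: field_simps)

lemma aa_Suc: "real (Suc k) * aa \<alpha> (Suc k) = \<alpha> * aa \<alpha> k"
proof -
  have "fact (Suc k) = real (Suc k) * (fact k :: real)" by simp
  moreover have "(fact k :: real) > 0" by simp
  ultimately show ?thesis unfolding aa_def by (simp add: field_simps del: of_nat_Suc fact_Suc)
qed

lemma th_shift: assumes "2*k \<le> m" shows "th \<mu> m = th \<mu> (m - 2*k) + 2 * real k"
proof -
  have "odd (m - 2*k) \<longleftrightarrow> odd m" using assms by auto
  then show ?thesis using assms unfolding th_def by (auto simp: of_nat_diff)
qed

lemma pointwise: assumes "\<mu> > - 1/2"
  shows "th \<mu> (Suc n) * cc \<mu> \<xi> \<alpha> (Suc n) k =
    (if 2*k \<le> n then \<xi> * cc \<mu> \<xi> \<alpha> n k else 0) +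
    (if 0 < k \<and> 2*k \<le> Suc n then 2 * \<alpha> * aa \<alpha> (k - 1) * bb \<mu> \<xi> (Suc n - 2*k) else 0)"
proof -
  have A: "2 * real k * aa \<alpha> k = (if 0 < k then 2 * \<alpha> * aa \<alpha> (k - 1) else 0)"
  proof (cases k)
    case (Suc j)
    have "2 * real k * aa \<alpha> k = 2 * (real (Suc j) * aa \<alpha> (Suc j))" using Suc by simp
    also have "\<dots> = 2 * \<alpha> * aa \<alpha> j" by (simp only: aa_Suc)
    finally show ?thesis using Suc by simp
  qed simp
  consider "2*k \<le> n" | "2*k = Suc n" | "2*k > Suc n" by linarith
  then show ?thesis
  proof cases
    case 1
    have m: "Suc n - 2*k = Suc (n - 2*k)" using 1 by auto
    have "th \<mu> (Suc n) = th \<mu> (Suc (n - 2*k)) + 2 * real k"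
      using th_shift[of k "Suc n" \<mu>] 1 m by auto
    then have "th \<mu> (Suc n) * cc \<mu> \<xi> \<alpha> (Suc n) k
       = aa \<alpha> k * (th \<mu> (Suc (n - 2*k)) * bb \<mu> \<xi> (Suc (n - 2*k)))
         + (2 * real k * aa \<alpha> k) * bb \<mu> \<xi> (Suc n - 2*k)"
      using 1 m unfolding cc_def by (simp add: algebra_simps)
    also have "\<dots> = \<xi> * cc \<mu> \<xi> \<alpha> n k +
       (if 0 < k \<and> 2*k \<le> Suc n then 2 * \<alpha> * aa \<alpha> (k - 1) * bb \<mu> \<xi> (Suc n - 2*k) else 0)"
      unfolding bb_Suc[OF assms] A using 1 by (auto simp: cc_def)
    finally show ?thesis using 1 by simp
  next
    case 2
    then have k: "0 < k" by auto
    have "th \<mu> (Suc n) = 2 * real k" unfolding th_def using 2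
      by (metis (mono_tags) add.right_neutral dvd_triv_left of_nat_mult of_nat_numeral)
    then show ?thesis using 2 k A unfolding cc_def by (auto simp: algebra_simps)
  next
    case 3
    then show ?thesis unfolding cc_def by auto
  qed
qed

lemma recur: assumes "\<mu> > - 1/2"
  shows "th \<mu> (Suc n) * SS \<mu> \<xi> \<alpha> (Suc n) = \<xi> * SS \<mu> \<xi> \<alpha> n + 2 * \<alpha> * VV \<mu> \<xi> \<alpha> n"
proof -
  have "th \<mu> (Suc n) * SS \<mu> \<xi> \<alpha> (Suc n) = (\<Sum>k\<le>Suc n. th \<mu> (Suc n) * cc \<mu> \<xi> \<alpha> (Suc n) k)"
  proof -
    have "SS \<mu> \<xi> \<alpha> (Suc n) = (\<Sum>k\<le>Suc n. cc \<mu> \<xi> \<alpha> (Suc n) k)" by (rule SS_ext) simp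
    then show ?thesis by (simp only: sum_distrib_left)
  qed
  also have "\<dots> = (\<Sum>k\<le>Suc n. (if 2*k \<le> n then \<xi> * cc \<mu> \<xi> \<alpha> n k else 0)) +
    (\<Sum>k\<le>Suc n. (if 0 < k \<and> 2*k \<le> Suc n then 2 * \<alpha> * aa \<alpha> (k - 1) * bb \<mu> \<xi> (Suc n - 2*k) else 0))"
    unfolding pointwise[OF assms] sum.distrib ..
  also have "(\<Sum>k\<le>Suc n. (if 2*k \<le> n then \<xi> * cc \<mu> \<xi> \<alpha> n k else 0)) = \<xi> * SS \<mu> \<xi> \<alpha> n"
    by (subst SS_ext[of _ "Suc n"]) (auto simp: sum_distrib_left cc_def intro!: sum.cong)
  also have "(\<Sum>k\<le>Suc n. (if 0 < k \<and> 2*k \<le> Suc n then 2 * \<alpha> * aa \<alpha> (k - 1) * bb \<mu> \<xi> (Suc n - 2*k) else 0))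
      = 2 * \<alpha> * VV \<mu> \<xi> \<alpha> n"
  proof (cases n)
    case 0
    then show ?thesis by (simp add: VV_def)
  next
    case (Suc p)
    have "(\<Sum>k\<le>Suc n. (if 0 < k \<and> 2*k \<le> Suc n then 2 * \<alpha> * aa \<alpha> (k - 1) * bb \<mu> \<xi> (Suc n - 2*k) else 0))
       = (\<Sum>j\<le>n. (if 2*j \<le> p then 2 * \<alpha> * aa \<alpha> j * bb \<mu> \<xi> (p - 2*j) else 0))"
      unfolding sum.atMost_Suc_shift using Suc by (auto intro!: sum.cong)
    also have "\<dots> = 2 * \<alpha> * SS \<mu> \<xi> \<alpha> p"
      by (subst SS_ext[of _ n]) (use Suc in \<open>auto simp: sum_distrib_left cc_def intro!: sum.cong\<close>)
    finally show ?thesis using Suc by (simp add: VV_def)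
  qed
  finally show ?thesis .
qed

lemma even_spread_sums:
  assumes "(\<lambda>k. f k) sums s"
  shows "(\<lambda>i. if even i then f (i div 2) else 0) sums s"
proof -
  define g where "g = (\<lambda>i::nat. if even i then f (i div 2) else 0)"
  have sm: "strict_mono (\<lambda>k::nat. 2*k)" by (auto simp: strict_mono_def)
  have z: "\<And>n. n \<notin> range (\<lambda>k::nat. 2*k) \<Longrightarrow> g n = 0"
    unfolding g_def by auto
  have e: "(\<lambda>k. g (2*k)) = f" unfolding g_def by auto
  have "(\<lambda>k. g (2*k)) sums s" unfolding e using assms by simp
  then have "g sums s" using sums_mono_reindex[of "\<lambda>k. 2*k" g s, OF sm z] by simp
  then show ?thesis unfolding g_def .
qed

lemma exp_sums: "(\<lambda>k. (x::real) ^ k / fact k) sums exp x"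
  using exp_converges[of x] by (simp add: divide_simps)

lemma summable_B: assumes "\<mu> > - 1/2"
  shows "summable (\<lambda>j. norm (bb \<mu> \<xi> j * t ^ j))"
proof (rule summable_ratio_test[of "1/2" "nat \<lceil>2 * \<bar>\<xi> * t\<bar>\<rceil>"])
  fix n assume n: "nat \<lceil>2 * \<bar>\<xi> * t\<bar>\<rceil> \<le> n"
  have thp: "th \<mu> (Suc n) > 0" using th_pos[OF assms] by simp
  have thn: "th \<mu> (Suc n) \<ge> real n" using assms unfolding th_def by auto
  have n2: "2 * \<bar>\<xi> * t\<bar> \<le> real n" using n by linarith
  have eq: "bb \<mu> \<xi> (Suc n) = \<xi> * bb \<mu> \<xi> n / th \<mu> (Suc n)"
    using bb_Suc[OF assms, of n \<xi>] thp by (simp add: field_simps)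
  have "norm (norm (bb \<mu> \<xi> (Suc n) * t ^ Suc n)) = (\<bar>\<xi> * t\<bar> / th \<mu> (Suc n)) * norm (bb \<mu> \<xi> n * t ^ n)"
    unfolding eq using thp by (simp add: abs_mult field_simps)
  also have "\<dots> \<le> (1/2) * norm (bb \<mu> \<xi> n * t ^ n)"
  proof (rule mult_right_mono)
    show "\<bar>\<xi> * t\<bar> / th \<mu> (Suc n) \<le> 1/2" using thp thn n2 by (simp add: divide_simps)
  qed simp
  finally show "norm (norm (bb \<mu> \<xi> (Suc n) * t ^ Suc n)) \<le> 1/2 * norm (norm (bb \<mu> \<xi> n * t ^ n))"
    by simp
qed simp

lemma gen: assumes "\<mu> > - 1/2"
  shows "(\<lambda>n. SS \<mu> \<xi> \<alpha> n * t ^ n) sums (exp (\<alpha> * t\<^sup>2) * dunkl_exp \<mu> (\<xi> * t))"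
proof -
  define A where "A = (\<lambda>i. if even i then aa \<alpha> (i div 2) * t ^ i else 0)"
  define B where "B = (\<lambda>j. bb \<mu> \<xi> j * t ^ j)"
  have As: "A sums exp (\<alpha> * t\<^sup>2)"
  proof -
    have "(\<lambda>i. if even i then (\<alpha> * t\<^sup>2) ^ (i div 2) / fact (i div 2) else 0) sums exp (\<alpha> * t\<^sup>2)"
      by (rule even_spread_sums[OF exp_sums])
    moreover have "(\<lambda>i. if even i then (\<alpha> * t\<^sup>2) ^ (i div 2) / fact (i div 2) else 0) = A"
      unfolding A_def aa_def by (auto simp: power_mult_distrib power_mult[symmetric])
    ultimately show ?thesis by simp
  qed
  have An: "summable (\<lambda>i. norm (A i))"
  proof -
    have "(\<lambda>i. if even i then (\<bar>\<alpha>\<bar> * t\<^sup>2) ^ (i div 2) / fact (i div 2) else 0) sums exp (\<bar>\<alpha>\<bar> * t\<^sup>2)"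
      by (rule even_spread_sums[OF exp_sums])
    moreover have "(\<lambda>i. if even i then (\<bar>\<alpha>\<bar> * t\<^sup>2) ^ (i div 2) / fact (i div 2) else 0) = (\<lambda>i. norm (A i))"
      unfolding A_def aa_def
    proof (rule ext)
      fix i :: nat
      show "(if even i then (\<bar>\<alpha>\<bar> * t\<^sup>2) ^ (i div 2) / fact (i div 2) else 0) =
        norm (if even i then \<alpha> ^ (i div 2) / fact (i div 2) * t ^ i else 0)"
      proof (cases "even i")
        case True
        then obtain k where i: "i = 2*k" by auto
        have "t ^ i = (t\<^sup>2) ^ k" unfolding i by (simp add: power_mult)
        then show ?thesis using i
          by (simp add: abs_mult power_mult_distrib power_abs abs_divide)
      qed simp
    qed
    ultimately show ?thesis by (metis sums_summable)
  qed
  have Bn: "summable (\<lambda>j. norm (B j))" unfolding B_def by (rule summable_B[OF assms])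
  have Bs: "B sums dunkl_exp \<mu> (\<xi> * t)"
  proof -
    have "summable B" using Bn summable_norm_cancel by blast
    moreover have "suminf B = dunkl_exp \<mu> (\<xi> * t)"
      unfolding dunkl_exp_def B_def bb_def by (simp add: power_mult_distrib)
    ultimately show ?thesis using summable_sums by fastforce
  qed
  have C: "(\<lambda>k. \<Sum>i\<le>k. A i * B (k - i)) sums (suminf A * suminf B)"
    by (rule Cauchy_product_sums[OF An Bn])
  have coef: "(\<Sum>i\<le>k. A i * B (k - i)) = SS \<mu> \<xi> \<alpha> k * t ^ k" for k
  proof -
    have sub: "(\<lambda>j. 2*j) ` {..k div 2} \<subseteq> {..k}" by auto
    have "(\<Sum>i\<le>k. A i * B (k - i)) = (\<Sum>i\<in>(\<lambda>j. 2*j) ` {..k div 2}. A i * B (k - i))"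
    proof (rule sum.mono_neutral_right[OF _ sub])
      show "\<forall>i\<in>{..k} - (\<lambda>j. 2*j) ` {..k div 2}. A i * B (k - i) = 0"
      proof
        fix i assume i: "i \<in> {..k} - (\<lambda>j. 2*j) ` {..k div 2}"
        have "odd i"
        proof
          assume "even i"
          then have "i = 2 * (i div 2)" by simp
          moreover have "i div 2 \<le> k div 2" using i by (auto intro: div_le_mono)
          ultimately show False using i by blast
        qed
        then show "A i * B (k - i) = 0" by (simp add: A_def)
      qed
    qed simp
    also have "\<dots> = (\<Sum>j\<le>k div 2. A (2*j) * B (k - 2*j))"
      by (subst sum.reindex) (auto simp: inj_on_def)
    also have "\<dots> = (\<Sum>j\<le>k div 2. aa \<alpha> j * bb \<mu> \<xi> (k - 2*j) * t ^ k)"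
    proof (rule sum.cong)
      fix j assume "j \<in> {..k div 2}"
      then have "2*j \<le> k" by auto
      then have "t ^ (2*j) * t ^ (k - 2*j) = t ^ k" by (simp add: power_add[symmetric])
      then show "A (2*j) * B (k - 2*j) = aa \<alpha> j * bb \<mu> \<xi> (k - 2*j) * t ^ k"
        unfolding A_def B_def by (simp add: algebra_simps)
    qed simp
    finally show ?thesis unfolding SS_def by (simp add: sum_distrib_right)
  qed
  show ?thesis using C unfolding coef sums_unique[OF As, symmetric] sums_unique[OF Bs, symmetric] .
qed

definition WW :: "real \<Rightarrow> real \<Rightarrow> real \<Rightarrow> nat \<Rightarrow> real" where
  "WW \<mu> \<xi> \<alpha> n = (case n of 0 \<Rightarrow> 0 | Suc p \<Rightarrow> VV \<mu> \<xi> \<alpha> p)"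

lemma shift_sums: fixes g :: "nat \<Rightarrow> real" and t s :: real
  assumes "(\<lambda>n. g n * t ^ n) sums s"
  shows "(\<lambda>n. (case n of 0 \<Rightarrow> 0 | Suc p \<Rightarrow> g p) * t ^ n) sums (t * s)"
proof -
  define h where "h = (\<lambda>n. (case n of 0 \<Rightarrow> 0 | Suc p \<Rightarrow> g p) * t ^ n)"
  have "(\<lambda>n. h (Suc n)) = (\<lambda>n. t * (g n * t ^ n))" unfolding h_def by (rule ext) (simp add: algebra_simps)
  then have "(\<lambda>n. h (Suc n)) sums (t * s)" using sums_mult[OF assms, of t] by simp
  then have "h sums (t * s + h 0)" by (simp only: sums_Suc_iff)
  then show ?thesis unfolding h_def by simp
qed

lemma recur0: assumes "\<mu> > - 1/2"
  shows "th \<mu> n * SS \<mu> \<xi> \<alpha> n = \<xi> * VV \<mu> \<xi> \<alpha> n + 2 * \<alpha> * WW \<mu> \<xi> \<alpha> n"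
proof (cases n)
  case 0 then show ?thesis by (simp add: th_def VV_def WW_def)
next
  case (Suc p) then show ?thesis using recur[OF assms, of p] by (simp add: VV_def WW_def)
qed

lemma th_Suc: "th \<mu> (Suc n) = th \<mu> n + 1 + 2 * \<mu> * (-1) ^ n"
  unfolding th_def by auto

theorem lemma2:
  fixes \<mu> \<xi> \<alpha> :: real
  assumes "\<mu> > - 1/2"
  shows "\<forall>t::real.
     (\<lambda>n. dunkl_heat_poly \<mu> (n + 1) \<xi> \<alpha> / dunkl_gamma \<mu> n * t ^ n) sums
        ((\<xi> + 2 * \<alpha> * t) * exp (\<alpha> * t\<^sup>2) * dunkl_exp \<mu> (\<xi> * t))
   \<and> (\<lambda>n. dunkl_heat_poly \<mu> (n + 2) \<xi> \<alpha> / dunkl_gamma \<mu> n * t ^ n) sums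
        ((\<xi>\<^sup>2 + 4 * \<xi> * \<alpha> * t + 4 * \<alpha>\<^sup>2 * t\<^sup>2 + 2 * \<alpha>) * exp (\<alpha> * t\<^sup>2) * dunkl_exp \<mu> (\<xi> * t)
         + 4 * \<alpha> * \<mu> * exp (\<alpha> * t\<^sup>2) * dunkl_exp \<mu> (- \<xi> * t))"
proof
  fix t :: real
  define F where "F = exp (\<alpha> * t\<^sup>2) * dunkl_exp \<mu> (\<xi> * t)"
  define G where "G = exp (\<alpha> * t\<^sup>2) * dunkl_exp \<mu> (- \<xi> * t)"
  have S: "(\<lambda>n. SS \<mu> \<xi> \<alpha> n * t ^ n) sums F" unfolding F_def by (rule gen[OF assms])
  have V: "(\<lambda>n. VV \<mu> \<xi> \<alpha> n * t ^ n) sums (t * F)"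
    unfolding VV_def by (rule shift_sums[OF S])
  have W: "(\<lambda>n. WW \<mu> \<xi> \<alpha> n * t ^ n) sums (t * (t * F))"
    unfolding WW_def by (rule shift_sums[OF V])
  have M: "(\<lambda>n. SS \<mu> \<xi> \<alpha> n * (- t) ^ n) sums G"
    using gen[OF assms, of \<xi> \<alpha> "- t"] unfolding G_def by simp
  have gp: "dunkl_gamma \<mu> n > 0" for n by (rule gamma_pos[OF assms])
  have h1: "dunkl_heat_poly \<mu> (Suc n) \<xi> \<alpha> / dunkl_gamma \<mu> n = th \<mu> (Suc n) * SS \<mu> \<xi> \<alpha> (Suc n)" for n
    unfolding heat_SS gamma_Suc[OF assms, of n] using gp[of n] by simp
  have h2: "dunkl_heat_poly \<mu> (Suc (Suc n)) \<xi> \<alpha> / dunkl_gamma \<mu> n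
      = th \<mu> (Suc n) * (th \<mu> (Suc (Suc n)) * SS \<mu> \<xi> \<alpha> (Suc (Suc n)))" for n
    unfolding heat_SS gamma_Suc[OF assms, of "Suc n"] gamma_Suc[OF assms, of n] using gp[of n] by simp
  have c1: "dunkl_heat_poly \<mu> (n + 1) \<xi> \<alpha> / dunkl_gamma \<mu> n * t ^ n
      = \<xi> * (SS \<mu> \<xi> \<alpha> n * t ^ n) + 2 * \<alpha> * (VV \<mu> \<xi> \<alpha> n * t ^ n)" for n
    using h1[of n] recur[OF assms, of n \<xi> \<alpha>] by (simp add: algebra_simps)
  have c2: "dunkl_heat_poly \<mu> (n + 2) \<xi> \<alpha> / dunkl_gamma \<mu> n * t ^ n
      = \<xi>\<^sup>2 * (SS \<mu> \<xi> \<alpha> n * t ^ n) + 4 * \<alpha> * \<xi> * (VV \<mu> \<xi> \<alpha> n * t ^ n)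
        + 4 * \<alpha>\<^sup>2 * (WW \<mu> \<xi> \<alpha> n * t ^ n) + 2 * \<alpha> * (SS \<mu> \<xi> \<alpha> n * t ^ n)
        + 4 * \<alpha> * \<mu> * (SS \<mu> \<xi> \<alpha> n * (- t) ^ n)" for n
  proof -
    have e1: "th \<mu> (Suc (Suc n)) * SS \<mu> \<xi> \<alpha> (Suc (Suc n)) = \<xi> * SS \<mu> \<xi> \<alpha> (Suc n) + 2 * \<alpha> * SS \<mu> \<xi> \<alpha> n"
      using recur[OF assms, of "Suc n" \<xi> \<alpha>] by (simp add: VV_def)
    have e2: "th \<mu> (Suc n) * SS \<mu> \<xi> \<alpha> (Suc n) = \<xi> * SS \<mu> \<xi> \<alpha> n + 2 * \<alpha> * VV \<mu> \<xi> \<alpha> n"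
      by (rule recur[OF assms])
    have e3: "th \<mu> (Suc n) * SS \<mu> \<xi> \<alpha> n = \<xi> * VV \<mu> \<xi> \<alpha> n + 2 * \<alpha> * WW \<mu> \<xi> \<alpha> n
        + SS \<mu> \<xi> \<alpha> n + 2 * \<mu> * (-1) ^ n * SS \<mu> \<xi> \<alpha> n"
      using recur0[OF assms, of n \<xi> \<alpha>] unfolding th_Suc by (simp add: algebra_simps)
    have "dunkl_heat_poly \<mu> (n + 2) \<xi> \<alpha> / dunkl_gamma \<mu> n
      = \<xi> * (th \<mu> (Suc n) * SS \<mu> \<xi> \<alpha> (Suc n)) + 2 * \<alpha> * (th \<mu> (Suc n) * SS \<mu> \<xi> \<alpha> n)"
      using h2[of n] unfolding e1 by (simp add: algebra_simps)
    also have "\<dots> = \<xi>\<^sup>2 * SS \<mu> \<xi> \<alpha> n + 4 * \<alpha> * \<xi> * VV \<mu> \<xi> \<alpha> n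
        + 4 * \<alpha>\<^sup>2 * WW \<mu> \<xi> \<alpha> n + 2 * \<alpha> * SS \<mu> \<xi> \<alpha> n
        + 4 * \<alpha> * \<mu> * (-1) ^ n * SS \<mu> \<xi> \<alpha> n"
      unfolding e2 e3 power2_eq_square by (simp add: algebra_simps)
    finally show ?thesis unfolding power_minus[of t n] by (simp add: algebra_simps)
  qed
  have R1: "(\<lambda>n. \<xi> * (SS \<mu> \<xi> \<alpha> n * t ^ n) + 2 * \<alpha> * (VV \<mu> \<xi> \<alpha> n * t ^ n)) sums (\<xi> * F + 2 * \<alpha> * (t * F))"
    by (intro sums_add sums_mult S V)
  have R2: "(\<lambda>n. \<xi>\<^sup>2 * (SS \<mu> \<xi> \<alpha> n * t ^ n) + 4 * \<alpha> * \<xi> * (VV \<mu> \<xi> \<alpha> n * t ^ n)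
        + 4 * \<alpha>\<^sup>2 * (WW \<mu> \<xi> \<alpha> n * t ^ n) + 2 * \<alpha> * (SS \<mu> \<xi> \<alpha> n * t ^ n)
        + 4 * \<alpha> * \<mu> * (SS \<mu> \<xi> \<alpha> n * (- t) ^ n)) sums
      (\<xi>\<^sup>2 * F + 4 * \<alpha> * \<xi> * (t * F) + 4 * \<alpha>\<^sup>2 * (t * (t * F)) + 2 * \<alpha> * F + 4 * \<alpha> * \<mu> * G)"
    by (intro sums_add sums_mult S V W M)
  show "(\<lambda>n. dunkl_heat_poly \<mu> (n + 1) \<xi> \<alpha> / dunkl_gamma \<mu> n * t ^ n) sums
        ((\<xi> + 2 * \<alpha> * t) * exp (\<alpha> * t\<^sup>2) * dunkl_exp \<mu> (\<xi> * t))
   \<and> (\<lambda>n. dunkl_heat_poly \<mu> (n + 2) \<xi> \<alpha> / dunkl_gamma \<mu> n * t ^ n) sums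
        ((\<xi>\<^sup>2 + 4 * \<xi> * \<alpha> * t + 4 * \<alpha>\<^sup>2 * t\<^sup>2 + 2 * \<alpha>) * exp (\<alpha> * t\<^sup>2) * dunkl_exp \<mu> (\<xi> * t)
         + 4 * \<alpha> * \<mu> * exp (\<alpha> * t\<^sup>2) * dunkl_exp \<mu> (- \<xi> * t))"
  proof
    have "(\<xi> + 2 * \<alpha> * t) * exp (\<alpha> * t\<^sup>2) * dunkl_exp \<mu> (\<xi> * t) = \<xi> * F + 2 * \<alpha> * (t * F)"
      unfolding F_def by (simp add: algebra_simps)
    then show "(\<lambda>n. dunkl_heat_poly \<mu> (n + 1) \<xi> \<alpha> / dunkl_gamma \<mu> n * t ^ n) sums
        ((\<xi> + 2 * \<alpha> * t) * exp (\<alpha> * t\<^sup>2) * dunkl_exp \<mu> (\<xi> * t))"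
      unfolding c1 using R1 by simp
  next
    have "(\<xi>\<^sup>2 + 4 * \<xi> * \<alpha> * t + 4 * \<alpha>\<^sup>2 * t\<^sup>2 + 2 * \<alpha>) * exp (\<alpha> * t\<^sup>2) * dunkl_exp \<mu> (\<xi> * t)
         + 4 * \<alpha> * \<mu> * exp (\<alpha> * t\<^sup>2) * dunkl_exp \<mu> (- \<xi> * t)
       = \<xi>\<^sup>2 * F + 4 * \<alpha> * \<xi> * (t * F) + 4 * \<alpha>\<^sup>2 * (t * (t * F)) + 2 * \<alpha> * F + 4 * \<alpha> * \<mu> * G"
      unfolding F_def G_def by (simp add: algebra_simps power2_eq_square)
    then show "(\<lambda>n. dunkl_heat_poly \<mu> (n + 2) \<xi> \<alpha> / dunkl_gamma \<mu> n * t ^ n) sums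
        ((\<xi>\<^sup>2 + 4 * \<xi> * \<alpha> * t + 4 * \<alpha>\<^sup>2 * t\<^sup>2 + 2 * \<alpha>) * exp (\<alpha> * t\<^sup>2) * dunkl_exp \<mu> (\<xi> * t)
         + 4 * \<alpha> * \<mu> * exp (\<alpha> * t\<^sup>2) * dunkl_exp \<mu> (- \<xi> * t))"
      unfolding c2 using R2 by simp
  qed
qed

end
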